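(* Let $G$ be a connected graph and let $G'$ be the graph obtained from $G$ by adding a new vertex adjacent to all vertices of $G$. Then $G$ is connected-domishold if and only if $G'$ is connected-domishold.
   Context: A connected dominating set (CD set) of a connected graph $G$ is a set $S\subseteq V(G)$ such that every vertex not in $S$ has a neighbor in $S$ and $G[S]$ is connected. A graph $G=(V,E)$ is connected-domishold if there exist $w:V\to\mathbb{R}_{\ge0}$ and $t\in\mathbb{R}_{\ge0}$ such that for every $S\subseteq V$, $\sum_{x\in S}w(x)\ge t$ iff $S$ is a CD set of $G$. *)

theory Defs
  imports Complex_Main
begin

definition graph :: "'a set \<Rightarrow> ('a \<Rightarrow> 'a \<Rightarrow> bool) \<Rightarrow> bool" where
  "graph V E \<longleftrightarrow> finite V \<and> (\<forall>x y. E x y \<longrightarrow> x \<in> V \<and> y \<in> V)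
     \<and> (\<forall>x y. E x y \<longrightarrow> E y x) \<and> (\<forall>x. \<not> E x x)"

definition induced_connected :: "('a \<Rightarrow> 'a \<Rightarrow> bool) \<Rightarrow> 'a set \<Rightarrow> bool" where
  "induced_connected E S \<longleftrightarrow> S \<noteq> {} \<and>
     (\<forall>x\<in>S. \<forall>y\<in>S. (\<lambda>u v. u \<in> S \<and> v \<in> S \<and> E u v)\<^sup>*\<^sup>* x y)"

definition connected_graph :: "'a set \<Rightarrow> ('a \<Rightarrow> 'a \<Rightarrow> bool) \<Rightarrow> bool" where
  "connected_graph V E \<longleftrightarrow> induced_connected E V"

definition dominating_set :: "'a set \<Rightarrow> ('a \<Rightarrow> 'a \<Rightarrow> bool) \<Rightarrow> 'a set \<Rightarrow> bool" where
  "dominating_set V E S \<longleftrightarrow> S \<subseteq> V \<and> (\<forall>x\<in>V - S. \<exists>y\<in>S. E x y)"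

definition cd_set :: "'a set \<Rightarrow> ('a \<Rightarrow> 'a \<Rightarrow> bool) \<Rightarrow> 'a set \<Rightarrow> bool" where
  "cd_set V E S \<longleftrightarrow> dominating_set V E S \<and> induced_connected E S"

definition connected_domishold :: "'a set \<Rightarrow> ('a \<Rightarrow> 'a \<Rightarrow> bool) \<Rightarrow> bool" where
  "connected_domishold V E \<longleftrightarrow>
     (\<exists>(w :: 'a \<Rightarrow> real) (t :: real). (\<forall>x\<in>V. w x \<ge> 0) \<and> t \<ge> 0 \<and>
        (\<forall>S\<subseteq>V. (\<Sum>x\<in>S. w x) \<ge> t \<longleftrightarrow> cd_set V E S))"

definition add_universal_V :: "'a set \<Rightarrow> 'a option set" where
  "add_universal_V V = insert None (Some ` V)"

definition add_universal_E :: "'a set \<Rightarrow> ('a \<Rightarrow> 'a \<Rightarrow> bool) \<Rightarrow> 'a option \<Rightarrow> 'a option \<Rightarrow> bool" where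
  "add_universal_E V E u v = (case (u, v) of
      (Some x, Some y) \<Rightarrow> E x y
    | (None, Some y) \<Rightarrow> y \<in> V
    | (Some x, None) \<Rightarrow> x \<in> V
    | (None, None) \<Rightarrow> False)"

end

theory Submission
  imports Defs
begin

lemma aue_simps[simp]:
  "add_universal_E V E (Some x) (Some y) = E x y"
  "add_universal_E V E None (Some y) = (y \<in> V)"
  "add_universal_E V E (Some x) None = (x \<in> V)"
  "add_universal_E V E None None = False"
  by (simp_all add: add_universal_E_def)

lemma walk_some1:
  assumes "(\<lambda>u v. u \<in> Some ` T \<and> v \<in> Some ` T \<and> add_universal_E V E u v)\<^sup>*\<^sup>* a b"
  shows "\<forall>x y. a = Some x \<longrightarrow> b = Some y \<longrightarrow> (\<lambda>u v. u \<in> T \<and> v \<in> T \<and> E u v)\<^sup>*\<^sup>* x y"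
  using assms
proof (induction rule: rtranclp_induct)
  case base
  then show ?case by auto
next
  case (step b c)
  then obtain z where z: "b = Some z" "z \<in> T" by auto
  show ?case
  proof (intro allI impI)
    fix x y assume a: "a = Some x" "c = Some y"
    have "(\<lambda>u v. u \<in> T \<and> v \<in> T \<and> E u v)\<^sup>*\<^sup>* x z" using step.IH a z by auto
    moreover have "E z y" "y \<in> T" using step.hyps(2) a z by auto
    ultimately show "(\<lambda>u v. u \<in> T \<and> v \<in> T \<and> E u v)\<^sup>*\<^sup>* x y"
      using z by (simp add: rtranclp.rtrancl_into_rtrancl)
  qed
qed

lemma walk_some2:
  assumes "(\<lambda>u v. u \<in> T \<and> v \<in> T \<and> E u v)\<^sup>*\<^sup>* x y"
  shows "(\<lambda>u v. u \<in> Some ` T \<and> v \<in> Some ` T \<and> add_universal_E V E u v)\<^sup>*\<^sup>* (Some x) (Some y)"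
  using assms
proof (induction rule: rtranclp_induct)
  case base
  then show ?case by auto
next
  case (step b c)
  then show ?case
    by (simp add: rtranclp.rtrancl_into_rtrancl)
qed

lemma ds_some:
  assumes "T \<subseteq> V" "T \<noteq> {}"
  shows "dominating_set (add_universal_V V) (add_universal_E V E) (Some ` T) \<longleftrightarrow> dominating_set V E T"
proof
  assume H: "dominating_set (add_universal_V V) (add_universal_E V E) (Some ` T)"
  show "dominating_set V E T" unfolding dominating_set_def
  proof (intro conjI ballI)
    show "T \<subseteq> V" by fact
    fix x assume x: "x \<in> V - T"
    then have "Some x \<in> add_universal_V V - Some ` T" by (auto simp: add_universal_V_def)
    then obtain b where b: "b \<in> Some ` T" "add_universal_E V E (Some x) b"
      using H unfolding dominating_set_def by blast
    then obtain y where "b = Some y" "y \<in> T" by blast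
    then show "\<exists>y\<in>T. E x y" using b by auto
  qed
next
  assume H: "dominating_set V E T"
  show "dominating_set (add_universal_V V) (add_universal_E V E) (Some ` T)" unfolding dominating_set_def
  proof (intro conjI ballI)
    show "Some ` T \<subseteq> add_universal_V V" using assms by (auto simp: add_universal_V_def)
    fix a assume a: "a \<in> add_universal_V V - Some ` T"
    show "\<exists>b\<in>Some ` T. add_universal_E V E a b"
    proof (cases a)
      case None
      obtain y where "y \<in> T" using assms by blast
      then show ?thesis using None assms by (intro bexI[of _ "Some y"]) auto
    next
      case (Some x)
      then have "x \<in> V - T" using a by (auto simp: add_universal_V_def)
      then obtain y where "y \<in> T" "E x y" using H unfolding dominating_set_def by blast
      then show ?thesis using Some by (intro bexI[of _ "Some y"]) auto
    qed
  qed
qed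

lemma cd_some:
  assumes "T \<subseteq> V"
  shows "cd_set (add_universal_V V) (add_universal_E V E) (Some ` T) \<longleftrightarrow> cd_set V E T"
proof -
  have ic: "induced_connected (add_universal_E V E) (Some ` T) \<longleftrightarrow> induced_connected E T"
  proof -
    have "(\<forall>x\<in>Some ` T. \<forall>y\<in>Some ` T. (\<lambda>u v. u \<in> Some ` T \<and> v \<in> Some ` T \<and> add_universal_E V E u v)\<^sup>*\<^sup>* x y)
      \<longleftrightarrow> (\<forall>x\<in>T. \<forall>y\<in>T. (\<lambda>u v. u \<in> T \<and> v \<in> T \<and> E u v)\<^sup>*\<^sup>* x y)"
    proof
      assume H: "\<forall>x\<in>Some ` T. \<forall>y\<in>Some ` T. (\<lambda>u v. u \<in> Some ` T \<and> v \<in> Some ` T \<and> add_universal_E V E u v)\<^sup>*\<^sup>* x y"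
      show "\<forall>x\<in>T. \<forall>y\<in>T. (\<lambda>u v. u \<in> T \<and> v \<in> T \<and> E u v)\<^sup>*\<^sup>* x y"
      proof (intro ballI)
        fix x y assume "x \<in> T" "y \<in> T"
        then have W: "(\<lambda>u v. u \<in> Some ` T \<and> v \<in> Some ` T \<and> add_universal_E V E u v)\<^sup>*\<^sup>* (Some x) (Some y)"
          using H by blast
        then show "(\<lambda>u v. u \<in> T \<and> v \<in> T \<and> E u v)\<^sup>*\<^sup>* x y"
          using walk_some1[OF W] by simp
      qed
    next
      assume H: "\<forall>x\<in>T. \<forall>y\<in>T. (\<lambda>u v. u \<in> T \<and> v \<in> T \<and> E u v)\<^sup>*\<^sup>* x y"
      show "\<forall>x\<in>Some ` T. \<forall>y\<in>Some ` T. (\<lambda>u v. u \<in> Some ` T \<and> v \<in> Some ` T \<and> add_universal_E V E u v)\<^sup>*\<^sup>* x y"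
      proof (intro ballI)
        fix a b assume "a \<in> Some ` T" "b \<in> Some ` T"
        then obtain x y where "a = Some x" "b = Some y" "x \<in> T" "y \<in> T" by blast
        then show "(\<lambda>u v. u \<in> Some ` T \<and> v \<in> Some ` T \<and> add_universal_E V E u v)\<^sup>*\<^sup>* a b"
          using H walk_some2[of T E x y V] by simp
      qed
    qed
    then show ?thesis unfolding induced_connected_def by simp
  qed
  have ds: "T \<noteq> {} \<Longrightarrow> dominating_set (add_universal_V V) (add_universal_E V E) (Some ` T) \<longleftrightarrow> dominating_set V E T"
    using assms ds_some by blast
  show ?thesis
  proof (cases "T = {}")
    case True then show ?thesis unfolding cd_set_def induced_connected_def by simp
  next
    case False then show ?thesis using ic ds unfolding cd_set_def by simp
  qed
qed

lemma cd_none: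
  assumes "S \<subseteq> add_universal_V V" "None \<in> S"
  shows "cd_set (add_universal_V V) (add_universal_E V E) S"
proof -
  have dom: "dominating_set (add_universal_V V) (add_universal_E V E) S"
    using assms unfolding dominating_set_def add_universal_V_def
    by (auto intro!: bexI[of _ None])
  have edge: "\<And>x. x \<in> S \<Longrightarrow> x \<noteq> None \<Longrightarrow> add_universal_E V E x None \<and> add_universal_E V E None x"
    using assms unfolding add_universal_V_def by auto
  let ?R = "\<lambda>u v. u \<in> S \<and> v \<in> S \<and> add_universal_E V E u v"
  have "?R\<^sup>*\<^sup>* x y" if "x \<in> S" "y \<in> S" for x y
  proof -
    have 1: "?R\<^sup>*\<^sup>* x None"
      by (cases "x = None") (use that assms edge in auto)
    have 2: "?R\<^sup>*\<^sup>* None y"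
      by (cases "y = None") (use that assms edge in auto)
    show ?thesis using 1 2 by (rule rtranclp_trans)
  qed
  then show ?thesis using dom assms unfolding cd_set_def induced_connected_def by auto
qed

lemma split_S:
  assumes "S \<subseteq> add_universal_V V" "None \<notin> S"
  shows "S = Some ` {x. Some x \<in> S}" "{x. Some x \<in> S} \<subseteq> V"
proof -
  show "S = Some ` {x. Some x \<in> S}"
  proof
    show "S \<subseteq> Some ` {x. Some x \<in> S}"
    proof
      fix u assume "u \<in> S"
      then obtain x where "u = Some x" using assms(2) by (cases u) auto
      then show "u \<in> Some ` {x. Some x \<in> S}" using \<open>u \<in> S\<close> by auto
    qed
  qed auto
  show "{x. Some x \<in> S} \<subseteq> V" using assms(1) unfolding add_universal_V_def by auto
qed

theorem mainTheorem3:
  fixes V :: "'a set" and E :: "'a \<Rightarrow> 'a \<Rightarrow> bool"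
  assumes "graph V E" and "connected_graph V E"
  shows "connected_domishold V E \<longleftrightarrow>
         connected_domishold (add_universal_V V) (add_universal_E V E)"
proof
  have finV: "finite V" using assms(1) by (simp add: graph_def)
  have finV': "finite (add_universal_V V)" using finV by (simp add: add_universal_V_def)
  {
    assume "connected_domishold V E"
    then obtain w :: "'a \<Rightarrow> real" and t :: real where w: "\<forall>x\<in>V. w x \<ge> 0" "t \<ge> 0"
      "\<forall>S\<subseteq>V. (\<Sum>x\<in>S. w x) \<ge> t \<longleftrightarrow> cd_set V E S"
      unfolding connected_domishold_def by blast
    define w' where "w' = (\<lambda>u. case u of None \<Rightarrow> t | Some x \<Rightarrow> w x)"
    have pos: "\<forall>x\<in>add_universal_V V. w' x \<ge> 0"
      using w unfolding w'_def add_universal_V_def by auto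
    have "\<forall>S\<subseteq>add_universal_V V. (\<Sum>x\<in>S. w' x) \<ge> t \<longleftrightarrow> cd_set (add_universal_V V) (add_universal_E V E) S"
    proof (intro allI impI)
      fix S assume S: "S \<subseteq> add_universal_V V"
      have finS: "finite S" using S finV' finite_subset by blast
      show "(\<Sum>x\<in>S. w' x) \<ge> t \<longleftrightarrow> cd_set (add_universal_V V) (add_universal_E V E) S"
      proof (cases "None \<in> S")
        case True
        have "(\<Sum>x\<in>S. w' x) = w' None + (\<Sum>x\<in>S - {None}. w' x)"
          using finS True by (simp add: sum.remove)
        moreover have "(\<Sum>x\<in>S - {None}. w' x) \<ge> 0"
          using pos S by (intro sum_nonneg) auto
        ultimately have "(\<Sum>x\<in>S. w' x) \<ge> t" by (simp add: w'_def)
        then show ?thesis using cd_none[OF S True] by simp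
      next
        case False
        define T where "T = {x. Some x \<in> S}"
        have ST: "S = Some ` T" "T \<subseteq> V" using split_S[OF S False] T_def by auto
        have "(\<Sum>x\<in>S. w' x) = (\<Sum>x\<in>T. w x)"
          unfolding ST(1) by (simp add: sum.reindex w'_def)
        then show ?thesis using w(3) ST cd_some[OF ST(2)] by simp
      qed
    qed
    then show "connected_domishold (add_universal_V V) (add_universal_E V E)"
      unfolding connected_domishold_def using pos w(2) by blast
  }
  {
    assume "connected_domishold (add_universal_V V) (add_universal_E V E)"
    then obtain w' :: "'a option \<Rightarrow> real" and t :: real where w: "\<forall>x\<in>add_universal_V V. w' x \<ge> 0" "t \<ge> 0"
      "\<forall>S\<subseteq>add_universal_V V. (\<Sum>x\<in>S. w' x) \<ge> t \<longleftrightarrow> cd_set (add_universal_V V) (add_universal_E V E) S"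
      unfolding connected_domishold_def by blast
    define w where "w = (\<lambda>x. w' (Some x))"
    have pos: "\<forall>x\<in>V. w x \<ge> 0" using w(1) unfolding w_def add_universal_V_def by auto
    have "\<forall>T\<subseteq>V. (\<Sum>x\<in>T. w x) \<ge> t \<longleftrightarrow> cd_set V E T"
    proof (intro allI impI)
      fix T assume T: "T \<subseteq> V"
      have sub: "Some ` T \<subseteq> add_universal_V V" using T by (auto simp: add_universal_V_def)
      have "(\<Sum>x\<in>Some ` T. w' x) = (\<Sum>x\<in>T. w x)" by (simp add: sum.reindex w_def)
      then show "(\<Sum>x\<in>T. w x) \<ge> t \<longleftrightarrow> cd_set V E T"
        using w(3) sub cd_some[OF T, of E] by metis
    qed
    then show "connected_domishold V E"
      unfolding connected_domishold_def using pos w(2) by blast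
  }
qed

end
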